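(* Let $k$ be a commutative ring and $A$ a $k$-algebra. Let $(\mathcal D\overset{l}{\underset{r}{\leftrightarrows}}\mathcal C,\theta)$ be an $A$-coring twisting datum, where $\mathcal C=(C,\Delta_C,e_C)$ and $\mathcal D=(D,\Delta_D,e_D)$. Suppose that $e_D\circ\theta^{-1}$ is invertible in the convolution algebra ${}_A\mathrm{Hom}_A(C,A)$ and $e_C\circ\theta$ is invertible in the convolution algebra ${}_A\mathrm{Hom}_A(D,A)$. Then the $A$-corings $\mathcal C$ and $\mathcal D$ are isomorphic.
   Context: An $A$-coring $(C,\Delta_C,e_C)$ is an $A$-bimodule $C$ with $A$-bimodule maps $\Delta_C:C\to C\otimes_AC$ (coassociative) and $e_C:C\to A$ (counital). A map of $A$-corings is an $A$-bimodule map compatible with comultiplications and counits. An $A$-coring twisting datum consists of $A$-corings $\mathcal C,\mathcal D$, $A$-coring maps $l:D\to C$ and $r:C\to D$, and an isomorphism of $\mathcal D$-$\mathcal C$-bicomodules $\theta:D^l\to{}^rC$, where $D^l$ is $D$ with left $\mathcal D$-coaction $\Delta_D$ and right $\mathcal C$-coaction $(D\otimes_Al)\Delta_D$, and ${}^rC$ is $C$ with left $\mathcal D$-coaction $(r\otimes_AC)\Delta_C$ and right $\mathcal C$-coaction $\Delta_C$. For an $A$-coring $C$, ${}_A\mathrm{Hom}_A(C,A)$ denotes the $A$-bimodule maps $C\to A$, an algebra under the convolution product $f*g=\mu_A\circ(f\otimes_Ag)\circ\Delta_C$ (with $\mu_A:A\otimes_AA\to A$ the multiplication) and unit $e_C$.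 *)

theory Defs
  imports "HOL-Library.Function_Algebras"
begin

definition isc :: "int \<Rightarrow> 'm::ab_group_add \<Rightarrow> 'm" where
  "isc n x = (if 0 \<le> n then (\<Sum>i<nat n. x) else - (\<Sum>i<nat (- n). x))"

definition fsupp :: "('x \<Rightarrow> int) \<Rightarrow> bool" where
  "fsupp p \<longleftrightarrow> finite {z. p z \<noteq> 0}"

definition fsum :: "('x \<Rightarrow> int) \<Rightarrow> ('x \<Rightarrow> 'm::ab_group_add) \<Rightarrow> 'm" where
  "fsum p g = (\<Sum>z\<in>{z. p z \<noteq> 0}. isc (p z) (g z))"

definition gen :: "'x \<Rightarrow> 'x \<Rightarrow> int" where
  "gen z = (\<lambda>w. if w = z then 1 else 0)"

definition bimodule :: "('a::ring_1 \<Rightarrow> 'm::ab_group_add \<Rightarrow> 'm) \<Rightarrow> ('m \<Rightarrow> 'a \<Rightarrow> 'm) \<Rightarrow> bool" where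
  "bimodule la ra \<longleftrightarrow>
     (\<forall>a x y. la a (x + y) = la a x + la a y) \<and> (\<forall>a b x. la (a + b) x = la a x + la b x) \<and>
     (\<forall>a b x. la (a * b) x = la a (la b x)) \<and> (\<forall>x. la 1 x = x) \<and>
     (\<forall>a x y. ra (x + y) a = ra x a + ra y a) \<and> (\<forall>a b x. ra x (a + b) = ra x a + ra x b) \<and>
     (\<forall>a b x. ra x (a * b) = ra (ra x a) b) \<and> (\<forall>x. ra x 1 = x) \<and>
     (\<forall>a b x. ra (la a x) b = la a (ra x b))"

definition bimod_map :: "('a::ring_1 \<Rightarrow> 'm::ab_group_add \<Rightarrow> 'm) \<Rightarrow> ('m \<Rightarrow> 'a \<Rightarrow> 'm) \<Rightarrow>
    ('a \<Rightarrow> 'n::ab_group_add \<Rightarrow> 'n) \<Rightarrow> ('n \<Rightarrow> 'a \<Rightarrow> 'n) \<Rightarrow> ('m \<Rightarrow> 'n) \<Rightarrow> bool" where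
  "bimod_map laM raM laN raN f \<longleftrightarrow>
     (\<forall>x y. f (x + y) = f x + f y) \<and> (\<forall>a x. f (laM a x) = laN a (f x)) \<and>
     (\<forall>x a. f (raM x a) = raN (f x) a)"

text \<open>M \<otimes>_A N is the free abelian group on M \<times> N modulo the subgroup tens_rel;
  an element of M \<otimes>_A N is represented by a finitely supported p, and two
  representatives are equal in M \<otimes>_A N iff their difference lies in tens_rel.\<close>
inductive_set tens_rel :: "('m::ab_group_add \<Rightarrow> 'a::ring_1 \<Rightarrow> 'm) \<Rightarrow> ('a \<Rightarrow> 'n::ab_group_add \<Rightarrow> 'n)
    \<Rightarrow> ('m \<times> 'n \<Rightarrow> int) set" for raM laN where
  tr_zero: "0 \<in> tens_rel raM laN"
| tr_diff: "p \<in> tens_rel raM laN \<Longrightarrow> q \<in> tens_rel raM laN \<Longrightarrow> p - q \<in> tens_rel raM laN"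
| tr_addl: "gen (x + x', y) - gen (x, y) - gen (x', y) \<in> tens_rel raM laN"
| tr_addr: "gen (x, y + y') - gen (x, y) - gen (x, y') \<in> tens_rel raM laN"
| tr_bal: "gen (raM x a, y) - gen (x, laN a y) \<in> tens_rel raM laN"

inductive_set tens3_rel :: "('m::ab_group_add \<Rightarrow> 'a::ring_1 \<Rightarrow> 'm) \<Rightarrow> ('a \<Rightarrow> 'm \<Rightarrow> 'm)
    \<Rightarrow> ('m \<times> 'm \<times> 'm \<Rightarrow> int) set" for ra la where
  t3_zero: "0 \<in> tens3_rel ra la"
| t3_diff: "p \<in> tens3_rel ra la \<Longrightarrow> q \<in> tens3_rel ra la \<Longrightarrow> p - q \<in> tens3_rel ra la"
| t3_add1: "gen (x + x', y, z) - gen (x, y, z) - gen (x', y, z) \<in> tens3_rel ra la"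
| t3_add2: "gen (x, y + y', z) - gen (x, y, z) - gen (x, y', z) \<in> tens3_rel ra la"
| t3_add3: "gen (x, y, z + z') - gen (x, y, z) - gen (x, y, z') \<in> tens3_rel ra la"
| t3_bal1: "gen (ra x a, y, z) - gen (x, la a y, z) \<in> tens3_rel ra la"
| t3_bal2: "gen (x, ra y a, z) - gen (x, y, la a z) \<in> tens3_rel ra la"

definition tens_lact :: "('a \<Rightarrow> 'm \<Rightarrow> 'm) \<Rightarrow> 'a \<Rightarrow> ('m \<times> 'n \<Rightarrow> int) \<Rightarrow> ('m \<times> 'n \<Rightarrow> int)" where
  "tens_lact la a p = fsum p (\<lambda>(x, y). gen (la a x, y))"

definition tens_ract :: "('n \<Rightarrow> 'a \<Rightarrow> 'n) \<Rightarrow> ('m \<times> 'n \<Rightarrow> int) \<Rightarrow> 'a \<Rightarrow> ('m \<times> 'n \<Rightarrow> int)" where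
  "tens_ract ra p a = fsum p (\<lambda>(x, y). gen (x, ra y a))"

definition map_tens :: "('m \<Rightarrow> 'm2) \<Rightarrow> ('n \<Rightarrow> 'n2) \<Rightarrow> ('m \<times> 'n \<Rightarrow> int) \<Rightarrow> ('m2 \<times> 'n2 \<Rightarrow> int)" where
  "map_tens f g p = fsum p (\<lambda>(x, y). gen (f x, g y))"

record ('a, 'c) coring =
  lact :: "'a \<Rightarrow> 'c \<Rightarrow> 'c"
  ract :: "'c \<Rightarrow> 'a \<Rightarrow> 'c"
  comul :: "'c \<Rightarrow> ('c \<times> 'c \<Rightarrow> int)"
  counit :: "'c \<Rightarrow> 'a"

definition is_coring :: "('a::ring_1, 'c::ab_group_add) coring \<Rightarrow> bool" where
  "is_coring C \<longleftrightarrow>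
     bimodule (lact C) (ract C) \<and>
     (\<forall>c. fsupp (comul C c)) \<and>
     \<comment> \<open>comultiplication is an A-bimodule map C \<rightarrow> C \<otimes>_A C\<close>
     (\<forall>x y. comul C (x + y) - comul C x - comul C y \<in> tens_rel (ract C) (lact C)) \<and>
     (\<forall>a x. comul C (lact C a x) - tens_lact (lact C) a (comul C x) \<in> tens_rel (ract C) (lact C)) \<and>
     (\<forall>a x. comul C (ract C x a) - tens_ract (ract C) (comul C x) a \<in> tens_rel (ract C) (lact C)) \<and>
     \<comment> \<open>counit is an A-bimodule map C \<rightarrow> A\<close>
     bimod_map (lact C) (ract C) (*) (*) (counit C) \<and>
     \<comment> \<open>coassociativity\<close>
     (\<forall>c. fsum (comul C c) (\<lambda>(x, y). fsum (comul C x) (\<lambda>(u, v). gen (u, v, y)))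
          - fsum (comul C c) (\<lambda>(x, y). fsum (comul C y) (\<lambda>(u, v). gen (x, u, v)))
          \<in> tens3_rel (ract C) (lact C)) \<and>
     \<comment> \<open>counitality\<close>
     (\<forall>c. fsum (comul C c) (\<lambda>(x, y). lact C (counit C x) y) = c) \<and>
     (\<forall>c. fsum (comul C c) (\<lambda>(x, y). ract C x (counit C y)) = c)"

definition coring_map :: "('a::ring_1, 'c::ab_group_add) coring \<Rightarrow> ('a, 'd::ab_group_add) coring
    \<Rightarrow> ('c \<Rightarrow> 'd) \<Rightarrow> bool" where
  "coring_map C D f \<longleftrightarrow>
     bimod_map (lact C) (ract C) (lact D) (ract D) f \<and>
     (\<forall>c. map_tens f f (comul C c) - comul D (f c) \<in> tens_rel (ract D) (lact D)) \<and>
     (\<forall>c. counit D (f c) = counit C c)"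

text \<open>A-coring twisting datum (D \<leftrightarrows> C with maps l : D \<rightarrow> C, r : C \<rightarrow> D, and
  an isomorphism of D-C-bicomodules \<theta> : D^l \<rightarrow> ^rC).\<close>
definition twisting_datum :: "('a::ring_1, 'c::ab_group_add) coring \<Rightarrow> ('a, 'd::ab_group_add) coring
    \<Rightarrow> ('d \<Rightarrow> 'c) \<Rightarrow> ('c \<Rightarrow> 'd) \<Rightarrow> ('d \<Rightarrow> 'c) \<Rightarrow> bool" where
  "twisting_datum C D l r \<theta> \<longleftrightarrow>
     is_coring C \<and> is_coring D \<and> coring_map D C l \<and> coring_map C D r \<and>
     bij \<theta> \<and> bimod_map (lact D) (ract D) (lact C) (ract C) \<theta> \<and>
     \<comment> \<open>left D-colinearity: (D \<otimes> \<theta>) \<circ> \<Delta>_D = (r \<otimes> C) \<circ> \<Delta>_C \<circ> \<theta>\<close>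
     (\<forall>d. map_tens id \<theta> (comul D d) - map_tens r id (comul C (\<theta> d)) \<in> tens_rel (ract D) (lact C)) \<and>
     \<comment> \<open>right C-colinearity: (\<theta> \<otimes> C) \<circ> (D \<otimes> l) \<circ> \<Delta>_D = \<Delta>_C \<circ> \<theta>\<close>
     (\<forall>d. map_tens \<theta> id (map_tens id l (comul D d)) - comul C (\<theta> d) \<in> tens_rel (ract C) (lact C))"

definition hom_AA :: "('a::ring_1, 'c::ab_group_add) coring \<Rightarrow> ('c \<Rightarrow> 'a) set" where
  "hom_AA C = {f. bimod_map (lact C) (ract C) (*) (*) f}"

definition conv :: "('a::ring_1, 'c::ab_group_add) coring \<Rightarrow> ('c \<Rightarrow> 'a) \<Rightarrow> ('c \<Rightarrow> 'a) \<Rightarrow> ('c \<Rightarrow> 'a)" where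
  "conv C f g = (\<lambda>c. fsum (comul C c) (\<lambda>(x, y). f x * g y))"

definition conv_invertible :: "('a::ring_1, 'c::ab_group_add) coring \<Rightarrow> ('c \<Rightarrow> 'a) \<Rightarrow> bool" where
  "conv_invertible C f \<longleftrightarrow> f \<in> hom_AA C \<and>
     (\<exists>g \<in> hom_AA C. conv C f g = counit C \<and> conv C g f = counit C)"

end

theory Submission
  imports Defs
begin


definition addf :: "('m::ab_group_add \<Rightarrow> 'n::ab_group_add) \<Rightarrow> bool" where
  "addf g \<longleftrightarrow> (\<forall>x y. g (x + y) = g x + g y)"

lemma addf_0: "addf g \<Longrightarrow> g 0 = 0"
  unfolding addf_def by (metis add_cancel_right_right add_0)

lemma addf_uminus: "addf g \<Longrightarrow> g (- x) = - g x"
  using addf_0[of g] unfolding addf_def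
  by (metis add.right_inverse eq_neg_iff_add_eq_0)

lemma addf_diff: "addf g \<Longrightarrow> g (x - y) = g x - g y"
  using addf_uminus[of g y] unfolding addf_def by (metis diff_conv_add_uminus)

lemma addf_sum: "addf g \<Longrightarrow> g (\<Sum>i\<in>I. f i) = (\<Sum>i\<in>I. g (f i))"
proof (induction I rule: infinite_finite_induct)
  case (infinite A) then show ?case using addf_0 by simp
next
  case empty then show ?case using addf_0 by simp
next
  case (insert x F) then show ?case by (simp add: addf_def)
qed

lemma isc_0[simp]: "isc 0 x = 0" by (simp add: isc_def)
lemma isc_plus1: "isc (n + 1) x = isc n x + x"
proof (cases "0 \<le> n")
  case True
  then have "nat (n+1) = Suc (nat n)" by simp
  then show ?thesis using True by (simp add: isc_def)
next
  case False
  then have e: "nat (-n) = Suc (nat (-n-1))" by simp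
  have "isc (n+1) x = - (\<Sum>i<nat (-n-1). x)"
    using False by (cases "n = -1") (auto simp: isc_def)
  then show ?thesis using False e by (simp add: isc_def)
qed

lemma isc_add: "isc (m + n) x = isc m x + isc n x"
proof (induction n rule: int_induct[where k=0])
  case base then show ?case by simp
next
  case (step1 i)
  then show ?case by (metis add.assoc isc_plus1)
next
  case (step2 i)
  have a: "isc (m + i) x = isc (m + (i - 1)) x + x" using isc_plus1[of "m+(i-1)" x] by simp
  have b: "isc i x = isc (i - 1) x + x" using isc_plus1[of "i-1" x] by simp
  from step2 a b show ?case by (metis add_right_cancel add.assoc)
qed

lemma isc_1[simp]: "isc 1 x = x" using isc_plus1[of 0 x] by simp

lemma isc_uminus: "isc (- n) x = - isc n x"
  using isc_add[of n "-n" x] by (simp add: eq_neg_iff_add_eq_0 add.commute)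

lemma isc_diff: "isc (m - n) x = isc m x - isc n x"
  using isc_add[of m "-n" x] isc_uminus[of n x] by simp

lemma addf_isc_arg: "addf (isc n)"
  unfolding addf_def isc_def by (simp add: sum.distrib)

lemma isc_zero_arg[simp]: "isc n 0 = 0" using addf_0[OF addf_isc_arg] .

lemma isc_addf: "addf g \<Longrightarrow> g (isc n x) = isc n (g x)"
  unfolding isc_def by (simp add: addf_sum addf_uminus)

lemma isc_int: "isc n (m::int) = n * m"
proof (induction n rule: int_induct[where k=0])
  case base then show ?case by simp
next
  case (step1 i) then show ?case using isc_plus1[of i m] by (simp add: distrib_right)
next
  case (step2 i) then show ?case using isc_plus1[of "i-1" m] by (simp add: algebra_simps)
qed

lemma isc_mult: "isc (n * m) x = isc n (isc m x)"
proof (induction n rule: int_induct[where k=0])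
  case base then show ?case by simp
next
  case (step1 i) then show ?case by (simp add: isc_plus1 distrib_right isc_add)
next
  case (step2 i) then show ?case using isc_plus1[of "i-1" "isc m x"] isc_add[of "(i-1)*m" m x]
    by (simp add: algebra_simps)
qed

lemma isc_eval: "(isc n p) w = isc n (p w)"
  using isc_addf[of "\<lambda>q. q w" n p] by (simp add: addf_def)

lemma addf_eval: "addf (\<lambda>q. q w)" by (simp add: addf_def)

lemma fsum_superset:
  assumes "finite S" "{z. p z \<noteq> 0} \<subseteq> S"
  shows "fsum p h = (\<Sum>z\<in>S. isc (p z) (h z))"
  unfolding fsum_def using assms
  by (intro sum.mono_neutral_left) auto

lemma fsupp_gen[simp]: "fsupp (gen z)"
  unfolding fsupp_def gen_def by simp

lemma fsupp_zero[simp]: "fsupp 0"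
  unfolding fsupp_def by simp

lemma fsupp_add: "fsupp p \<Longrightarrow> fsupp q \<Longrightarrow> fsupp (p + q)"
  unfolding fsupp_def
  by (rule finite_subset[of _ "{z. p z \<noteq> 0} \<union> {z. q z \<noteq> 0}"]) auto

lemma fsupp_uminus: "fsupp p \<Longrightarrow> fsupp (- p)"
  unfolding fsupp_def by simp

lemma fsupp_diff: "fsupp p \<Longrightarrow> fsupp q \<Longrightarrow> fsupp (p - q)"
  unfolding fsupp_def
  by (rule finite_subset[of _ "{z. p z \<noteq> 0} \<union> {z. q z \<noteq> 0}"]) auto

lemma fsupp_isc: "fsupp p \<Longrightarrow> fsupp (isc n p)"
  unfolding fsupp_def
  by (rule finite_subset[of _ "{z. p z \<noteq> 0}"]) (auto simp: isc_eval)

lemma fsum_add: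
  assumes "fsupp p" "fsupp q"
  shows "fsum (p + q) h = fsum p h + fsum q h"
proof -
  let ?S = "{z. p z \<noteq> 0} \<union> {z. q z \<noteq> 0}"
  have f: "finite ?S" using assms unfolding fsupp_def by simp
  have "fsum (p + q) h = (\<Sum>z\<in>?S. isc ((p+q) z) (h z))" by (rule fsum_superset[OF f]) auto
  also have "\<dots> = (\<Sum>z\<in>?S. isc (p z) (h z)) + (\<Sum>z\<in>?S. isc (q z) (h z))"
    by (simp add: isc_add sum.distrib)
  also have "\<dots> = fsum p h + fsum q h"
    by (subst (1 2) fsum_superset[OF f]) auto
  finally show ?thesis .
qed

lemma fsum_uminus: "fsum (- p) h = - fsum p h"
  unfolding fsum_def by (simp add: isc_uminus sum_negf)

lemma fsum_diff: "fsupp p \<Longrightarrow> fsupp q \<Longrightarrow> fsum (p - q) h = fsum p h - fsum q h"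
  using fsum_add[of p "-q" h] fsupp_uminus[of q] by (simp add: fsum_uminus)

lemma fsum_zero[simp]: "fsum 0 h = 0"
  unfolding fsum_def by simp

lemma fsum_gen[simp]: "fsum (gen z) h = h z"
proof -
  have "{w. gen z w \<noteq> 0} = {z}" by (auto simp: gen_def)
  then show ?thesis unfolding fsum_def by (simp add: gen_def)
qed

lemma fsum_isc: "fsupp p \<Longrightarrow> fsum (isc n p) h = isc n (fsum p h)"
proof -
  assume a: "fsupp p"
  let ?S = "{z. p z \<noteq> 0}"
  have f: "finite ?S" using a unfolding fsupp_def by simp
  have "fsum (isc n p) h = (\<Sum>z\<in>?S. isc ((isc n p) z) (h z))"
    by (rule fsum_superset[OF f]) (auto simp: isc_eval)
  also have "\<dots> = (\<Sum>z\<in>?S. isc n (isc (p z) (h z)))"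
    by (simp add: isc_eval isc_int isc_mult)
  also have "\<dots> = isc n (fsum p h)"
    unfolding fsum_def by (simp add: addf_sum[OF addf_isc_arg])
  finally show ?thesis .
qed

lemma fsum_zero'[simp]: "fsum (\<lambda>_. 0) h = 0"
  unfolding fsum_def by simp

lemma fsupp_zero'[simp]: "fsupp (\<lambda>_. 0)"
  unfolding fsupp_def by simp

lemma fsum_sum:
  assumes "finite I" "\<forall>i\<in>I. fsupp (q i)"
  shows "fsum (\<Sum>i\<in>I. q i) h = (\<Sum>i\<in>I. fsum (q i) h) \<and> fsupp (\<Sum>i\<in>I. q i)"
  using assms
proof (induction I rule: finite_induct)
  case empty then show ?case by simp
next
  case (insert x F)
  then have "fsupp (q x)" "fsupp (\<Sum>i\<in>F. q i)" "fsum (\<Sum>i\<in>F. q i) h = (\<Sum>i\<in>F. fsum (q i) h)" by auto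
  then show ?case using insert(1,2) fsum_add[of "q x" "\<Sum>i\<in>F. q i" h] fsupp_add[of "q x" "\<Sum>i\<in>F. q i"]
    by (simp only: sum.insert[OF insert(1,2)] simp_thms)
qed

lemma fsum_additive: "addf g \<Longrightarrow> g (fsum p h) = fsum p (\<lambda>z. g (h z))"
  unfolding fsum_def by (simp add: addf_sum isc_addf)

lemma fsum_eval: "(fsum p k) w = fsum p (\<lambda>z. k z w)"
  using fsum_additive[OF addf_eval[of w], of p k] .

lemma fsupp_fsum:
  assumes "fsupp p" "\<forall>z. fsupp (k z)"
  shows "fsupp (fsum p k)"
  unfolding fsum_def using assms fsum_sum[of "{z. p z \<noteq> 0}" "\<lambda>z. isc (p z) (k z)" "\<lambda>_. 0::int"]
  by (auto simp: fsupp_def intro: fsupp_isc[unfolded fsupp_def])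

lemma fsum_fsum:
  assumes "fsupp p" "\<forall>z. fsupp (k z)"
  shows "fsum (fsum p k) h = fsum p (\<lambda>z. fsum (k z) h)"
proof -
  have f: "finite {z. p z \<noteq> 0}" using assms unfolding fsupp_def by simp
  have "fsum (fsum p k) h = (\<Sum>z\<in>{z. p z \<noteq> 0}. fsum (isc (p z) (k z)) h)"
    unfolding fsum_def[of p k] using fsum_sum[OF f, of "\<lambda>z. isc (p z) (k z)" h] assms(2)
    by (auto intro: fsupp_isc)
  also have "\<dots> = fsum p (\<lambda>z. fsum (k z) h)"
    unfolding fsum_def[of p] using assms(2) by (simp add: fsum_isc)
  finally show ?thesis .
qed

lemma fsum_gen_id: "fsupp p \<Longrightarrow> fsum p gen = p"
proof (rule ext)
  fix w assume a: "fsupp p"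
  have e: "\<And>z. isc (p z) (if w = z then 1 else (0::int)) = (if w = z then p z else 0)"
    by (simp add: isc_int)
  have "fsum p gen w = fsum p (\<lambda>z. gen z w)" by (rule fsum_eval)
  also have "\<dots> = (\<Sum>z\<in>{z. p z \<noteq> 0}. isc (p z) (if w = z then 1 else 0))"
    unfolding fsum_def gen_def by (simp only: eq_commute)
  also have "\<dots> = (\<Sum>z\<in>{z. p z \<noteq> 0}. (if w = z then p z else 0))"
    by (simp only: e)
  also have "\<dots> = p w"
    using a by (subst sum.delta') (auto simp: fsupp_def)
  finally show "fsum p gen w = p w" .
qed


definition tens_ok :: "('m::ab_group_add \<Rightarrow> 'a \<Rightarrow> 'm) \<Rightarrow> ('a \<Rightarrow> 'n::ab_group_add \<Rightarrow> 'n) \<Rightarrow> ('m \<times> 'n \<Rightarrow> 'x::ab_group_add) \<Rightarrow> bool" where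
  "tens_ok ra la h \<longleftrightarrow> (\<forall>x x' y. h (x + x', y) = h (x, y) + h (x', y)) \<and>
     (\<forall>x y y'. h (x, y + y') = h (x, y) + h (x, y')) \<and> (\<forall>x a y. h (ra x a, y) = h (x, la a y))"

lemma fsupp_diff_eta: "fsupp p \<Longrightarrow> fsupp q \<Longrightarrow> fsupp (\<lambda>a. p a - q a)"
  using fsupp_diff[of p q] by (simp add: fun_diff_def)

lemma fsum_diff_eta: "fsupp p \<Longrightarrow> fsupp q \<Longrightarrow> fsum (\<lambda>a. p a - q a) h = fsum p h - fsum q h"
  using fsum_diff[of p q h] by (simp add: fun_diff_def)

lemma tens_rel_fsupp: "p \<in> tens_rel ra la \<Longrightarrow> fsupp p"
  by (induction rule: tens_rel.induct) (auto intro!: fsupp_diff_eta)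

lemma tens_rel_fsum: "p \<in> tens_rel ra la \<Longrightarrow> tens_ok ra la h \<Longrightarrow> fsum p h = 0"
proof (induction rule: tens_rel.induct)
  case tr_zero then show ?case by simp
next
  case (tr_diff p q) then show ?case using fsum_diff_eta[OF tens_rel_fsupp tens_rel_fsupp, OF tr_diff.hyps(1,2), of h] by simp
qed (simp_all add: fsum_diff fsupp_diff fsum_diff_eta fsupp_diff_eta tens_ok_def)

lemma tens_rel_eq: "p - q \<in> tens_rel ra la \<Longrightarrow> fsupp p \<Longrightarrow> fsupp q \<Longrightarrow> tens_ok ra la h \<Longrightarrow> fsum p h = fsum q h"
  using tens_rel_fsum[of "p - q" ra la h] by (simp add: fsum_diff)

definition tens3_ok :: "('m::ab_group_add \<Rightarrow> 'a \<Rightarrow> 'm) \<Rightarrow> ('a \<Rightarrow> 'm \<Rightarrow> 'm) \<Rightarrow> ('m \<times> 'm \<times> 'm \<Rightarrow> 'x::ab_group_add) \<Rightarrow> bool" where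
  "tens3_ok ra la h \<longleftrightarrow> (\<forall>x x' y z. h (x + x', y, z) = h (x, y, z) + h (x', y, z)) \<and>
     (\<forall>x y y' z. h (x, y + y', z) = h (x, y, z) + h (x, y', z)) \<and>
     (\<forall>x y z z'. h (x, y, z + z') = h (x, y, z) + h (x, y, z')) \<and>
     (\<forall>x a y z. h (ra x a, y, z) = h (x, la a y, z)) \<and>
     (\<forall>x a y z. h (x, ra y a, z) = h (x, y, la a z))"

lemma tens3_rel_fsupp: "p \<in> tens3_rel ra la \<Longrightarrow> fsupp p"
  by (induction rule: tens3_rel.induct) (auto intro!: fsupp_diff_eta)

lemma tens3_rel_fsum: "p \<in> tens3_rel ra la \<Longrightarrow> tens3_ok ra la h \<Longrightarrow> fsum p h = 0"
proof (induction rule: tens3_rel.induct)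
  case t3_zero then show ?case by simp
next
  case (t3_diff p q) then show ?case using fsum_diff_eta[OF tens3_rel_fsupp tens3_rel_fsupp, OF t3_diff.hyps(1,2), of h] by simp
qed (simp_all add: fsum_diff fsupp_diff fsum_diff_eta fsupp_diff_eta tens3_ok_def)

lemma tens3_rel_eq: "p - q \<in> tens3_rel ra la \<Longrightarrow> fsupp p \<Longrightarrow> fsupp q \<Longrightarrow> tens3_ok ra la h \<Longrightarrow> fsum p h = fsum q h"
  using tens3_rel_fsum[of "p - q" ra la h] by (simp add: fsum_diff)

lemma fsum_fsum_pair:
  assumes "fsupp p" "\<forall>x y. fsupp (k x y)"
  shows "fsum (fsum p (\<lambda>(x, y). k x y)) h = fsum p (\<lambda>(x, y). fsum (k x y) h)"
  using fsum_fsum[of p "\<lambda>(x, y). k x y" h] assms unfolding case_prod_beta' by simp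

lemma fsupp_fsum_pair:
  assumes "fsupp p" "\<forall>x y. fsupp (k x y)"
  shows "fsupp (fsum p (\<lambda>(x, y). k x y))"
  using fsupp_fsum[of p "\<lambda>(x, y). k x y"] assms unfolding case_prod_beta' by simp

lemma fsupp_map_tens: "fsupp p \<Longrightarrow> fsupp (map_tens f g p)"
  unfolding map_tens_def by (rule fsupp_fsum_pair) auto

lemma fsum_map_tens: "fsupp p \<Longrightarrow> fsum (map_tens f g p) h = fsum p (\<lambda>(x, y). h (f x, g y))"
  unfolding map_tens_def by (subst fsum_fsum_pair) auto

lemma map_tens_diff: "fsupp p \<Longrightarrow> fsupp q \<Longrightarrow> map_tens f g (p - q) = map_tens f g p - map_tens f g q"
  unfolding map_tens_def by (rule fsum_diff)

lemma map_tens_comp: "fsupp p \<Longrightarrow> map_tens f g (map_tens f' g' p) = map_tens (f \<circ> f') (g \<circ> g') p"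
  unfolding map_tens_def[of f g] by (subst fsum_map_tens) (auto simp: map_tens_def)

lemma map_tens_id: "fsupp p \<Longrightarrow> map_tens id id p = p"
  unfolding map_tens_def by (simp add: fsum_gen_id[unfolded case_prod_eta] case_prod_Pair_iden)

lemma tr_addl': "(\<lambda>a. gen (x + x', y) a - gen (x, y) a - gen (x', y) a) \<in> tens_rel raM laN"
  using tens_rel.tr_addl[of x x' y raM laN] by (simp add: fun_diff_def)
lemma tr_addr': "(\<lambda>a. gen (x, y + y') a - gen (x, y) a - gen (x, y') a) \<in> tens_rel raM laN"
  using tens_rel.tr_addr[of x y y' raM laN] by (simp add: fun_diff_def)
lemma tr_bal': "(\<lambda>b. gen (raM x a, y) b - gen (x, laN a y) b) \<in> tens_rel raM laN"
  using tens_rel.tr_bal[of raM x a y laN] by (simp add: fun_diff_def)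

lemma map_tens_rel:
  assumes f: "bimod_map laM raM laM' raM' f" and g: "bimod_map laN raN laN' raN' g"
  shows "p \<in> tens_rel raM laN \<Longrightarrow> map_tens f g p \<in> tens_rel raM' laN'"
proof (induction rule: tens_rel.induct)
  case tr_zero then show ?case unfolding map_tens_def fsum_zero by (rule tens_rel.tr_zero)
next
  case (tr_diff p q) then show ?case
    using map_tens_diff[OF tens_rel_fsupp tens_rel_fsupp, OF tr_diff.hyps(1,2), of f g] tens_rel.tr_diff[OF tr_diff.IH]
    by (simp add: fun_diff_def)
next
  case (tr_addl x x' y) then show ?case using f
    by (simp add: fsum_diff_eta fsupp_diff_eta fsupp_diff fsum_diff map_tens_def bimod_map_def tr_addl')
next
  case (tr_addr x y y') then show ?case using g
    by (simp add: fsum_diff_eta fsupp_diff_eta fsupp_diff fsum_diff map_tens_def bimod_map_def tr_addr')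
next
  case (tr_bal x a y) then show ?case using f g
    by (simp add: fsum_diff_eta fsupp_diff_eta fsupp_diff fsum_diff map_tens_def bimod_map_def tr_bal')
qed

lemma tens_ok_ract:
  assumes b: "bimodule la ra" and f: "bimod_map laN raN (*) (*) f"
  shows "tens_ok ra laN (\<lambda>(x, y). ra x (f y))"
  unfolding tens_ok_def
proof (intro conjI allI)
  fix x x' y show "(case (x + x', y) of (x, y) \<Rightarrow> ra x (f y)) =
      (case (x, y) of (x, y) \<Rightarrow> ra x (f y)) + (case (x', y) of (x, y) \<Rightarrow> ra x (f y))"
    using b unfolding bimodule_def by simp
next
  fix x y y' show "(case (x, y + y') of (x, y) \<Rightarrow> ra x (f y)) =
      (case (x, y) of (x, y) \<Rightarrow> ra x (f y)) + (case (x, y') of (x, y) \<Rightarrow> ra x (f y))"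
    using b f unfolding bimodule_def bimod_map_def by simp
next
  fix x a y
  have "ra (ra x a) (f y) = ra x (a * f y)" using b unfolding bimodule_def by simp
  also have "\<dots> = ra x (f (laN a y))" using f unfolding bimod_map_def by simp
  finally show "(case (ra x a, y) of (x, y) \<Rightarrow> ra x (f y)) = (case (x, laN a y) of (x, y) \<Rightarrow> ra x (f y))"
    by simp
qed



theorem lemma5p1:
  fixes C :: "('a::ring_1, 'c::ab_group_add) coring"
    and D :: "('a, 'd::ab_group_add) coring"
    and l :: "'d \<Rightarrow> 'c" and r :: "'c \<Rightarrow> 'd" and \<theta> :: "'d \<Rightarrow> 'c"
  assumes "twisting_datum C D l r \<theta>"
    and "conv_invertible C (counit D \<circ> inv \<theta>)"
    and "conv_invertible D (counit C \<circ> \<theta>)"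
  shows "\<exists>f :: 'c \<Rightarrow> 'd. coring_map C D f \<and> coring_map D C (inv f) \<and> bij f"
proof -
  have cC: "is_coring C" and cD: "is_coring D" and rmap: "coring_map C D r" and bt: "bij \<theta>"
    and lcol: "\<forall>d. map_tens id \<theta> (comul D d) - map_tens r id (comul C (\<theta> d)) \<in> tens_rel (ract D) (lact C)"
    using assms(1) unfolding twisting_datum_def by blast+
  have bmC: "bimodule (lact C) (ract C)" and fsC: "\<And>c. fsupp (comul C c)"
    and addC: "\<And>x y. comul C (x + y) - comul C x - comul C y \<in> tens_rel (ract C) (lact C)"
    and raC: "\<And>a x. comul C (ract C x a) - tens_ract (ract C) (comul C x) a \<in> tens_rel (ract C) (lact C)"
    and coaC: "\<And>c. fsum (comul C c) (\<lambda>(x, y). fsum (comul C x) (\<lambda>(u, v). gen (u, v, y)))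
          - fsum (comul C c) (\<lambda>(x, y). fsum (comul C y) (\<lambda>(u, v). gen (x, u, v)))
          \<in> tens3_rel (ract C) (lact C)"
    and cuC: "\<And>c. fsum (comul C c) (\<lambda>(x, y). ract C x (counit C y)) = c"
    using cC unfolding is_coring_def by blast+
  have bmD: "bimodule (lact D) (ract D)" and fsD: "\<And>c. fsupp (comul D c)"
    and cuD: "\<And>c. fsum (comul D c) (\<lambda>(x, y). ract D x (counit D y)) = c"
    using cD unfolding is_coring_def by blast+
  have rbm: "bimod_map (lact C) (ract C) (lact D) (ract D) r"
    and rco: "\<And>c. map_tens r r (comul C c) - comul D (r c) \<in> tens_rel (ract D) (lact D)"
    and rcu: "\<And>c. counit D (r c) = counit C c"
    using rmap unfolding coring_map_def by blast+
  define \<psi> where "\<psi> = counit D \<circ> inv \<theta>"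
  from assms(2) obtain g where \<psi>h: "\<psi> \<in> hom_AA C" and gh: "g \<in> hom_AA C"
    and \<psi>g: "conv C \<psi> g = counit C"
    unfolding conv_invertible_def \<psi>_def by blast
  have \<psi>bm: "bimod_map (lact C) (ract C) (*) (*) \<psi>" and gbm: "bimod_map (lact C) (ract C) (*) (*) g"
    using \<psi>h gh unfolding hom_AA_def by auto
  define \<rho> where "\<rho> h c = fsum (comul C c) (\<lambda>(x, y). ract C x (h y))" for h c
  have radd: "addf r" using rbm unfolding bimod_map_def addf_def by auto
  have A: "r (\<rho> \<psi> (\<theta> d)) = d" for d
  proof -
    let ?h = "\<lambda>(x, y). ract D x (\<psi> y)"
    have ok: "tens_ok (ract D) (lact C) ?h" by (rule tens_ok_ract[OF bmD \<psi>bm])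
    have e: "fsum (map_tens id \<theta> (comul D d)) ?h = fsum (map_tens r id (comul C (\<theta> d))) ?h"
      by (rule tens_rel_eq[OF lcol[rule_format] fsupp_map_tens fsupp_map_tens ok]) (auto simp: fsC fsD)
    have "fsum (map_tens id \<theta> (comul D d)) ?h = fsum (comul D d) (\<lambda>(x, y). ract D x (counit D y))"
      using bt by (simp add: fsum_map_tens fsD \<psi>_def bij_is_inj)
    also have "\<dots> = d" by (rule cuD)
    finally have 1: "fsum (map_tens id \<theta> (comul D d)) ?h = d" .
    have "fsum (map_tens r id (comul C (\<theta> d))) ?h = fsum (comul C (\<theta> d)) (\<lambda>z. r ((\<lambda>(x, y). ract C x (\<psi> y)) z))"
      using rbm by (simp add: fsum_map_tens fsC bimod_map_def case_prod_beta')
    also have "\<dots> = r (\<rho> \<psi> (\<theta> d))" unfolding \<rho>_def by (rule fsum_additive[OF radd, symmetric])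
    finally show ?thesis using e 1 by simp
  qed
  have B: "\<rho> \<psi> (\<rho> g c) = c" for c
  proof -
    let ?h = "\<lambda>(x, y). ract C x (\<psi> y)"
    have ok: "tens_ok (ract C) (lact C) ?h" by (rule tens_ok_ract[OF bmC \<psi>bm])
    have radd: "addf (\<rho> \<psi>)" unfolding addf_def
    proof (intro allI)
      fix x y
      have "fsum (comul C (x + y) - comul C x - comul C y) ?h = 0"
        by (rule tens_rel_fsum[OF addC ok])
      then have "\<rho> \<psi> (x + y) - \<rho> \<psi> x - \<rho> \<psi> y = 0"
        unfolding \<rho>_def using fsum_diff[of "comul C (x+y) - comul C x" "comul C y" ?h]
          fsum_diff[of "comul C (x+y)" "comul C x" ?h] by (simp add: fsC fsupp_diff)
      then show "\<rho> \<psi> (x + y) = \<rho> \<psi> x + \<rho> \<psi> y"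
        by (metis diff_diff_eq eq_iff_diff_eq_0)
    qed
    have rr: "\<rho> \<psi> (ract C x a) = fsum (comul C x) (\<lambda>(u, v). ract C (ract C u (\<psi> v)) a)" for x a
    proof -
      have "\<rho> \<psi> (ract C x a) = fsum (tens_ract (ract C) (comul C x) a) ?h"
        unfolding \<rho>_def
        by (rule tens_rel_eq[OF raC _ _ ok]) (auto simp: fsC tens_ract_def intro!: fsupp_fsum_pair)
      also have "\<dots> = fsum (map_tens id (\<lambda>v. ract C v a) (comul C x)) ?h"
        by (simp add: tens_ract_def map_tens_def)
      also have "\<dots> = fsum (comul C x) (\<lambda>(u, v). ract C u (\<psi> (ract C v a)))"
        by (simp add: fsum_map_tens fsC)
      also have "\<dots> = fsum (comul C x) (\<lambda>(u, v). ract C (ract C u (\<psi> v)) a)"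
        using \<psi>bm bmC by (simp add: bimod_map_def bimodule_def)
      finally show ?thesis .
    qed
    let ?H = "\<lambda>(u, v, w). ract C (ract C u (\<psi> v)) (g w)"
    have ok3: "tens3_ok (ract C) (lact C) ?H"
      using \<psi>bm gbm bmC unfolding tens3_ok_def bimod_map_def bimodule_def
      by (simp add: mult.assoc)
    have "\<rho> \<psi> (\<rho> g c) = fsum (comul C c) (\<lambda>z. \<rho> \<psi> ((\<lambda>(x, y). ract C x (g y)) z))"
      unfolding \<rho>_def[of g] by (rule fsum_additive[OF radd])
    also have "\<dots> = fsum (comul C c) (\<lambda>(x, y). fsum (comul C x) (\<lambda>(u, v). ?H (u, v, y)))"
      by (intro arg_cong[where f="fsum (comul C c)"] ext) (simp add: rr split_beta)
    also have "\<dots> = fsum (fsum (comul C c) (\<lambda>(x, y). fsum (comul C x) (\<lambda>(u, v). gen (u, v, y)))) ?H"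
      by (simp add: fsum_fsum_pair fsC fsupp_fsum_pair)
    also have "\<dots> = fsum (fsum (comul C c) (\<lambda>(x, y). fsum (comul C y) (\<lambda>(u, v). gen (x, u, v)))) ?H"
      by (rule tens3_rel_eq[OF coaC _ _ ok3]) (auto simp: fsC intro!: fsupp_fsum_pair)
    also have "\<dots> = fsum (comul C c) (\<lambda>(x, y). fsum (comul C y) (\<lambda>(u, v). ract C x (\<psi> u * g v)))"
      using bmC by (simp add: fsum_fsum_pair fsC fsupp_fsum_pair bimodule_def)
    also have "\<dots> = fsum (comul C c) (\<lambda>(x, y). ract C x (counit C y))"
    proof -
      have "fsum (comul C y) (\<lambda>(u, v). ract C x (\<psi> u * g v)) = ract C x (counit C y)" for x y
      proof -
        have ax: "addf (ract C x)" using bmC unfolding bimodule_def addf_def by auto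
        have "fsum (comul C y) (\<lambda>(u, v). ract C x (\<psi> u * g v))
            = fsum (comul C y) (\<lambda>z. ract C x ((\<lambda>(u, v). \<psi> u * g v) z))"
          by (intro arg_cong[where f="fsum (comul C y)"] ext) (simp add: split_beta)
        also have "\<dots> = ract C x (conv C \<psi> g y)"
          unfolding conv_def by (rule fsum_additive[OF ax, symmetric])
        finally show ?thesis using \<psi>g by simp
      qed
      then show ?thesis by simp
    qed
    also have "\<dots> = c" by (rule cuC)
    finally show ?thesis .
  qed
  have rs: "surj r" using A by (metis surj_def)
  have ri: "inj r"
  proof (rule injI)
    fix x y assume e: "r x = r y"
    have key: "z = \<rho> \<psi> (\<theta> (r z))" for z
    proof -
      obtain w where w: "\<rho> g z = \<theta> w" using bt by (metis bij_pointE)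
      have "z = \<rho> \<psi> (\<theta> w)" using B[of z] w by simp
      moreover have "r z = w" using A[of w] calculation by simp
      ultimately show ?thesis by simp
    qed
    show "x = y" using key[of x] key[of y] e by simp
  qed
  have br: "bij r" using rs ri by (simp add: bij_def)
  define s where "s = inv r"
  have sr: "s (r c) = c" for c unfolding s_def using ri by simp
  have rs': "r (s d) = d" for d unfolding s_def using rs by (simp add: surj_f_inv_f)
  have sbm: "bimod_map (lact D) (ract D) (lact C) (ract C) s"
    unfolding bimod_map_def
  proof (intro conjI allI)
    fix x y show "s (x + y) = s x + s y"
      using rbm rs'[of x] rs'[of y] sr[of "s x + s y"] unfolding bimod_map_def by metis
  next
    fix a x show "s (lact D a x) = lact C a (s x)"
      using rbm rs'[of x] sr[of "lact C a (s x)"] unfolding bimod_map_def by metis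
  next
    fix x a show "s (ract D x a) = ract C (s x) a"
      using rbm rs'[of x] sr[of "ract C (s x) a"] unfolding bimod_map_def by metis
  qed
  have smap: "coring_map D C s"
    unfolding coring_map_def
  proof (intro conjI allI)
    show "bimod_map (lact D) (ract D) (lact C) (ract C) s" by (rule sbm)
  next
    fix d
    let ?c = "s d"
    have "map_tens s s (map_tens r r (comul C ?c) - comul D (r ?c)) \<in> tens_rel (ract C) (lact C)"
      by (rule map_tens_rel[OF sbm sbm rco])
    moreover have "map_tens s s (map_tens r r (comul C ?c) - comul D (r ?c)) = comul C ?c - map_tens s s (comul D d)"
    proof -
      have "map_tens s s (map_tens r r (comul C ?c)) = map_tens (s \<circ> r) (s \<circ> r) (comul C ?c)"
        by (simp add: map_tens_comp fsC)
      also have "\<dots> = comul C ?c"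
        using sr by (simp add: comp_def map_tens_id[unfolded id_def] fsC)
      finally show ?thesis by (simp add: map_tens_diff fsupp_map_tens fsC fsD rs')
    qed
    ultimately have "comul C ?c - map_tens s s (comul D d) \<in> tens_rel (ract C) (lact C)" by simp
    then have "0 - (comul C ?c - map_tens s s (comul D d)) \<in> tens_rel (ract C) (lact C)"
      by (rule tens_rel.tr_diff[OF tens_rel.tr_zero])
    then show "map_tens s s (comul D d) - comul C (s d) \<in> tens_rel (ract C) (lact C)" by simp
  next
    fix d show "counit C (s d) = counit D d" using rcu[of "s d"] rs' by simp
  qed
  show ?thesis using rmap smap br unfolding s_def by blast
qed

end
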